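(* Every Coxeter group is pq-generated; that is, for a Coxeter group $W$ with Coxeter generating set $S$ (presentation $\langle S\mid s^2=e\ (s\in S),\ (st)^{m_{st}}=e\ (s\neq t,\ m_{st}<\infty)\rangle$ with integers $m_{st}\geq 2$), there exists a power quandle $P$ with $W\cong\mathrm{Gr}(P)$. In particular this holds for the symmetric groups.
   Context: A power quandle $(P,\rhd,\pi,e)$ consists of a set $P$, a binary operation $\rhd$, an element $e$, and maps $\pi^n\colon P\to P$ ($n\in\mathbb{Z}$) satisfying: each $\lambda_a\colon b\mapsto a\rhd b$ is bijective and $a\rhd(b\rhd c)=(a\rhd b)\rhd(a\rhd c)$; $a\rhd a=a$; $e\rhd b=b$, $a\rhd e=e$; $\pi^1=\mathrm{id}$, $\pi^m\circ\pi^n=\pi^{mn}$; $\pi^0(a)=e$; $a\rhd\pi^n(b)=\pi^n(a\rhd b)$; $\pi^n(a)\rhd b=\lambda_a^n(b)$. For a power quandle $P$, $\mathrm{Gr}(P)$ is the group with generators $\sigma(a)$, $a\in P$, and relations $\sigma(a\rhd b)=\sigma(a)\sigma(b)\sigma(a)^{-1}$, $\sigma(\pi^n(a))=\sigma(a)^n$, $\sigma(e)=1$. A group $G$ is pq-generated if there exists a power quandle $P$ with $G\cong\mathrm{Gr}(P)$. *)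

theory Defs
  imports "HOL-Algebra.Algebra" "HOL-Library.Extended_Nat"
begin

text \<open>Words over generators: a letter (x, False) stands for x, (x, True) for x inverse.
  A relation is a pair of words (l, r) meaning l = r.\<close>

type_synonym 'a word = "('a \<times> bool) list"

inductive pres_eq :: "'a set \<Rightarrow> ('a word \<times> 'a word) set \<Rightarrow> 'a word \<Rightarrow> 'a word \<Rightarrow> bool"
  for Xg :: "'a set" and Rl :: "('a word \<times> 'a word) set" where
  refl: "pres_eq Xg Rl w w"
| sym: "pres_eq Xg Rl u v \<Longrightarrow> pres_eq Xg Rl v u"
| trans: "pres_eq Xg Rl u v \<Longrightarrow> pres_eq Xg Rl v w \<Longrightarrow> pres_eq Xg Rl u w"
| cong: "pres_eq Xg Rl u v \<Longrightarrow> pres_eq Xg Rl (p @ u @ q) (p @ v @ q)"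
| cancel: "x \<in> Xg \<Longrightarrow> pres_eq Xg Rl [(x, b), (x, \<not> b)] []"
| rel: "(l, r) \<in> Rl \<Longrightarrow> pres_eq Xg Rl l r"

definition gen_words :: "'a set \<Rightarrow> 'a word set" where
  "gen_words Xg = lists (Xg \<times> UNIV)"

definition pres_class :: "'a set \<Rightarrow> ('a word \<times> 'a word) set \<Rightarrow> 'a word \<Rightarrow> 'a word set" where
  "pres_class Xg Rl w = {v \<in> gen_words Xg. pres_eq Xg Rl w v}"

definition presented_group :: "'a set \<Rightarrow> ('a word \<times> 'a word) set \<Rightarrow> 'a word set monoid" where
  "presented_group Xg Rl =
     \<lparr> carrier = pres_class Xg Rl ` gen_words Xg,
       monoid.mult = (\<lambda>A B. {w \<in> gen_words Xg. \<exists>a\<in>A. \<exists>b\<in>B. pres_eq Xg Rl w (a @ b)}),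
       monoid.one = pres_class Xg Rl [] \<rparr>"

definition gen_pow_word :: "'a \<Rightarrow> int \<Rightarrow> 'a word" where
  "gen_pow_word x n = replicate (nat \<bar>n\<bar>) (x, n < 0)"

definition bij_int_pow :: "'a set \<Rightarrow> ('a \<Rightarrow> 'a) \<Rightarrow> int \<Rightarrow> 'a \<Rightarrow> 'a" where
  "bij_int_pow P f n = (if 0 \<le> n then f ^^ nat n else the_inv_into P f ^^ nat (- n))"

text \<open>(P, op, pw, e) is a power quandle; \<open>op a b\<close> is \<open>a \<rhd> b\<close>, \<open>pw n a\<close> is \<open>\<pi>^n(a)\<close>.\<close>
definition power_quandle ::
  "'a set \<Rightarrow> ('a \<Rightarrow> 'a \<Rightarrow> 'a) \<Rightarrow> (int \<Rightarrow> 'a \<Rightarrow> 'a) \<Rightarrow> 'a \<Rightarrow> bool" where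
  "power_quandle P op pw e \<longleftrightarrow>
     e \<in> P \<and>
     (\<forall>a\<in>P. \<forall>b\<in>P. op a b \<in> P) \<and>
     (\<forall>n. \<forall>a\<in>P. pw n a \<in> P) \<and>
     (\<forall>a\<in>P. bij_betw (op a) P P) \<and>
     (\<forall>a\<in>P. \<forall>b\<in>P. \<forall>c\<in>P. op a (op b c) = op (op a b) (op a c)) \<and>
     (\<forall>a\<in>P. op a a = a) \<and>
     (\<forall>b\<in>P. op e b = b) \<and>
     (\<forall>a\<in>P. op a e = e) \<and>
     (\<forall>a\<in>P. pw 1 a = a) \<and>
     (\<forall>m n. \<forall>a\<in>P. pw m (pw n a) = pw (m * n) a) \<and>
     (\<forall>a\<in>P. pw 0 a = e) \<and>
     (\<forall>n. \<forall>a\<in>P. \<forall>b\<in>P. op a (pw n b) = pw n (op a b)) \<and>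
     (\<forall>n. \<forall>a\<in>P. \<forall>b\<in>P. op (pw n a) b = bij_int_pow P (op a) n b)"

definition Gr_rels ::
  "'a set \<Rightarrow> ('a \<Rightarrow> 'a \<Rightarrow> 'a) \<Rightarrow> (int \<Rightarrow> 'a \<Rightarrow> 'a) \<Rightarrow> 'a \<Rightarrow> ('a word \<times> 'a word) set" where
  "Gr_rels P op pw e =
     {([(op a b, False)], [(a, False), (b, False), (a, True)]) | a b. a \<in> P \<and> b \<in> P}
   \<union> {([(pw n a, False)], gen_pow_word a n) | a n. a \<in> P}
   \<union> {([(e, False)], [])}"

definition Gr ::
  "'a set \<Rightarrow> ('a \<Rightarrow> 'a \<Rightarrow> 'a) \<Rightarrow> (int \<Rightarrow> 'a \<Rightarrow> 'a) \<Rightarrow> 'a \<Rightarrow> 'a word set monoid" where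
  "Gr P op pw e = presented_group P (Gr_rels P op pw e)"

definition coxeter_matrix :: "'b set \<Rightarrow> ('b \<Rightarrow> 'b \<Rightarrow> enat) \<Rightarrow> bool" where
  "coxeter_matrix S m \<longleftrightarrow>
     (\<forall>s\<in>S. \<forall>t\<in>S. m s t = m t s) \<and> (\<forall>s\<in>S. \<forall>t\<in>S. s \<noteq> t \<longrightarrow> 2 \<le> m s t)"

definition coxeter_rels :: "'b set \<Rightarrow> ('b \<Rightarrow> 'b \<Rightarrow> enat) \<Rightarrow> ('b word \<times> 'b word) set" where
  "coxeter_rels S m =
     {([(s, False), (s, False)], []) | s. s \<in> S}
   \<union> {(concat (replicate (the_enat (m s t)) [(s, False), (t, False)]), []) | s t.
        s \<in> S \<and> t \<in> S \<and> s \<noteq> t \<and> m s t \<noteq> \<infinity>}"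

definition coxeter_group :: "'b set \<Rightarrow> ('b \<Rightarrow> 'b \<Rightarrow> enat) \<Rightarrow> 'b word set monoid" where
  "coxeter_group S m = presented_group S (coxeter_rels S m)"

end

theory Submission
  imports Defs
begin


lemma pe_app:
  assumes "pres_eq Xg Rl u u'" "pres_eq Xg Rl v v'"
  shows "pres_eq Xg Rl (u @ v) (u' @ v')"
proof -
  have "pres_eq Xg Rl ([] @ u @ v) ([] @ u' @ v)" by (rule pres_eq.cong[OF assms(1)])
  moreover have "pres_eq Xg Rl (u' @ v @ []) (u' @ v' @ [])" by (rule pres_eq.cong[OF assms(2)])
  ultimately show ?thesis by (auto intro: pres_eq.trans)
qed

lemma gw_simps [simp]:
  "[] \<in> gen_words Xg"
  "(a # w \<in> gen_words Xg) = (fst a \<in> Xg \<and> w \<in> gen_words Xg)"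
  "(u @ v \<in> gen_words Xg) = (u \<in> gen_words Xg \<and> v \<in> gen_words Xg)"
  by (auto simp: gen_words_def mem_Times_iff)

lemma pe_cls: "pres_eq Xg Rl u v \<Longrightarrow> pres_class Xg Rl u = pres_class Xg Rl v"
  unfolding pres_class_def by (auto intro: pres_eq.trans pres_eq.sym)

lemma mem_cls: "u \<in> gen_words Xg \<Longrightarrow> u \<in> pres_class Xg Rl u"
  unfolding pres_class_def by (auto intro: pres_eq.refl)

lemma cls_eq_iff: "u \<in> gen_words Xg \<Longrightarrow> (pres_class Xg Rl u = pres_class Xg Rl v) = pres_eq Xg Rl u v"
  using pe_cls mem_cls unfolding pres_class_def by (blast intro: pres_eq.sym)

lemma mult_cls:
  assumes "u \<in> gen_words Xg" "v \<in> gen_words Xg"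
  shows "pres_class Xg Rl u \<otimes>\<^bsub>presented_group Xg Rl\<^esub> pres_class Xg Rl v = pres_class Xg Rl (u @ v)"
proof -
  have "\<And>w. (\<exists>a\<in>pres_class Xg Rl u. \<exists>b\<in>pres_class Xg Rl v. pres_eq Xg Rl w (a @ b))
          = pres_eq Xg Rl (u @ v) w"
  proof
    fix w assume "\<exists>a\<in>pres_class Xg Rl u. \<exists>b\<in>pres_class Xg Rl v. pres_eq Xg Rl w (a @ b)"
    then obtain a b where "pres_eq Xg Rl u a" "pres_eq Xg Rl v b" "pres_eq Xg Rl w (a @ b)"
      unfolding pres_class_def by blast
    then show "pres_eq Xg Rl (u @ v) w" by (meson pe_app pres_eq.sym pres_eq.trans)
  next
    fix w assume "pres_eq Xg Rl (u @ v) w"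
    then show "\<exists>a\<in>pres_class Xg Rl u. \<exists>b\<in>pres_class Xg Rl v. pres_eq Xg Rl w (a @ b)"
      using assms mem_cls by (blast intro: pres_eq.sym)
  qed
  then show ?thesis by (simp add: presented_group_def pres_class_def)
qed

definition inv_word :: "'a word \<Rightarrow> 'a word" where
  "inv_word w = rev (map (\<lambda>(x, b). (x, \<not> b)) w)"

lemma inv_word_gw: "w \<in> gen_words Xg \<Longrightarrow> inv_word w \<in> gen_words Xg"
  by (auto simp: inv_word_def gen_words_def)

lemma inv_word_cancel: "u \<in> gen_words Xg \<Longrightarrow> pres_eq Xg Rl (inv_word u @ u) []"
proof (induction u)
  case Nil
  then show ?case by (simp add: inv_word_def pres_eq.refl)
next
  case (Cons a u)
  obtain x b where a: "a = (x, b)" by (cases a)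
  have x: "x \<in> Xg" using Cons.prems a by simp
  have "inv_word (a # u) @ a # u = inv_word u @ [(x, \<not> b), (x, \<not>\<not> b)] @ u"
    by (simp add: inv_word_def a)
  moreover have "pres_eq Xg Rl (inv_word u @ [(x, \<not> b), (x, \<not>\<not> b)] @ u) (inv_word u @ [] @ u)"
    by (rule pres_eq.cong, rule pres_eq.cancel[OF x])
  moreover have "pres_eq Xg Rl (inv_word u @ u) []" using Cons by simp
  ultimately show ?case by (auto intro: pres_eq.trans)
qed

lemma pg_carrier: "carrier (presented_group Xg Rl) = pres_class Xg Rl ` gen_words Xg"
  by (simp add: presented_group_def)

lemma pg_one: "\<one>\<^bsub>presented_group Xg Rl\<^esub> = pres_class Xg Rl []"
  by (simp add: presented_group_def)

lemma pg_group: "group (presented_group Xg Rl)"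
proof (rule groupI)
  fix x y assume "x \<in> carrier (presented_group Xg Rl)" "y \<in> carrier (presented_group Xg Rl)"
  then obtain u v where "u \<in> gen_words Xg" "v \<in> gen_words Xg" "x = pres_class Xg Rl u" "y = pres_class Xg Rl v"
    by (auto simp: pg_carrier)
  then show "x \<otimes>\<^bsub>presented_group Xg Rl\<^esub> y \<in> carrier (presented_group Xg Rl)"
    by (simp add: mult_cls pg_carrier)
next
  show "\<one>\<^bsub>presented_group Xg Rl\<^esub> \<in> carrier (presented_group Xg Rl)"
    by (auto simp: pg_carrier pg_one)
next
  fix x y z assume "x \<in> carrier (presented_group Xg Rl)" "y \<in> carrier (presented_group Xg Rl)"
    "z \<in> carrier (presented_group Xg Rl)"
  then obtain u v w where "u \<in> gen_words Xg" "v \<in> gen_words Xg" "w \<in> gen_words Xg"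
    "x = pres_class Xg Rl u" "y = pres_class Xg Rl v" "z = pres_class Xg Rl w"
    by (auto simp: pg_carrier)
  then show "x \<otimes>\<^bsub>presented_group Xg Rl\<^esub> y \<otimes>\<^bsub>presented_group Xg Rl\<^esub> z =
      x \<otimes>\<^bsub>presented_group Xg Rl\<^esub> (y \<otimes>\<^bsub>presented_group Xg Rl\<^esub> z)"
    by (simp add: mult_cls)
next
  fix x assume "x \<in> carrier (presented_group Xg Rl)"
  then obtain u where u: "u \<in> gen_words Xg" "x = pres_class Xg Rl u"
    by (auto simp: pg_carrier)
  then show "\<one>\<^bsub>presented_group Xg Rl\<^esub> \<otimes>\<^bsub>presented_group Xg Rl\<^esub> x = x"
    using mult_cls[of "[]" Xg u Rl] by (simp add: pg_one)
  show "\<exists>y\<in>carrier (presented_group Xg Rl). y \<otimes>\<^bsub>presented_group Xg Rl\<^esub> x = \<one>\<^bsub>presented_group Xg Rl\<^esub>"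
  proof (intro bexI)
    show "pres_class Xg Rl (inv_word u) \<otimes>\<^bsub>presented_group Xg Rl\<^esub> x = \<one>\<^bsub>presented_group Xg Rl\<^esub>"
      using u inv_word_gw[OF u(1)] inv_word_cancel[OF u(1), of Rl]
      by (simp add: mult_cls pg_one pe_cls)
    show "pres_class Xg Rl (inv_word u) \<in> carrier (presented_group Xg Rl)"
      using inv_word_gw[OF u(1)] by (simp add: pg_carrier)
  qed
qed

section \<open>Evaluation of words\<close>

fun wev :: "('c, 'd) monoid_scheme \<Rightarrow> 'a set \<Rightarrow> ('a \<Rightarrow> 'c) \<Rightarrow> 'a word \<Rightarrow> 'c" where
  "wev H Xg f [] = \<one>\<^bsub>H\<^esub>"
| "wev H Xg f ((x, b) # w) =
     (if x \<in> Xg then (if b then inv\<^bsub>H\<^esub> f x else f x) else \<one>\<^bsub>H\<^esub>) \<otimes>\<^bsub>H\<^esub> wev H Xg f w"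

context group
begin

lemma wev_closed: "f ` Xg \<subseteq> carrier G \<Longrightarrow> wev G Xg f w \<in> carrier G"
  by (induction w) (auto simp: image_subset_iff)

lemma wev_append: "f ` Xg \<subseteq> carrier G \<Longrightarrow> wev G Xg f (u @ v) = wev G Xg f u \<otimes> wev G Xg f v"
  by (induction u) (auto simp: wev_closed m_assoc image_subset_iff)

lemma wev_pe:
  assumes f: "f ` Xg \<subseteq> carrier G" and Rl: "\<And>l r. (l, r) \<in> Rl \<Longrightarrow> wev G Xg f l = wev G Xg f r"
    and "pres_eq Xg Rl u v"
  shows "wev G Xg f u = wev G Xg f v"
  using assms(3)
proof induction
  case (cong u v p q)
  then show ?case by (simp add: wev_append[OF f])
next
  case (cancel x b)
  then show ?case using f by auto
qed (auto simp: Rl)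

end

definition pg_ext :: "('c, 'd) monoid_scheme \<Rightarrow> 'a set \<Rightarrow> ('a \<Rightarrow> 'c) \<Rightarrow> 'a word set \<Rightarrow> 'c" where
  "pg_ext H Xg f A = wev H Xg f (SOME w. w \<in> A)"

lemma pg_ext_cls:
  assumes "group H" "f ` Xg \<subseteq> carrier H" "\<And>l r. (l, r) \<in> Rl \<Longrightarrow> wev H Xg f l = wev H Xg f r"
    "u \<in> gen_words Xg"
  shows "pg_ext H Xg f (pres_class Xg Rl u) = wev H Xg f u"
proof -
  have "(SOME w. w \<in> pres_class Xg Rl u) \<in> pres_class Xg Rl u"
    using mem_cls[OF assms(4)] by (rule someI)
  then have "pres_eq Xg Rl u (SOME w. w \<in> pres_class Xg Rl u)" by (simp add: pres_class_def)
  then show ?thesis unfolding pg_ext_def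
    using group.wev_pe[OF assms(1,2,3)] by metis
qed

lemma pg_ext_hom:
  assumes "group H" "f ` Xg \<subseteq> carrier H" "\<And>l r. (l, r) \<in> Rl \<Longrightarrow> wev H Xg f l = wev H Xg f r"
  shows "pg_ext H Xg f \<in> hom (presented_group Xg Rl) H"
proof (rule homI)
  fix x assume "x \<in> carrier (presented_group Xg Rl)"
  then obtain u where "u \<in> gen_words Xg" "x = pres_class Xg Rl u" by (auto simp: pg_carrier)
  then show "pg_ext H Xg f x \<in> carrier H"
    using pg_ext_cls[OF assms] group.wev_closed[OF assms(1,2)] by simp
next
  fix x y assume "x \<in> carrier (presented_group Xg Rl)" "y \<in> carrier (presented_group Xg Rl)"
  then obtain u v where "u \<in> gen_words Xg" "v \<in> gen_words Xg" "x = pres_class Xg Rl u" "y = pres_class Xg Rl v"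
    by (auto simp: pg_carrier)
  then show "pg_ext H Xg f (x \<otimes>\<^bsub>presented_group Xg Rl\<^esub> y) = pg_ext H Xg f x \<otimes>\<^bsub>H\<^esub> pg_ext H Xg f y"
    using pg_ext_cls[OF assms] group.wev_append[OF assms(1,2)] by (simp add: mult_cls)
qed

abbreviation pgen :: "'a set \<Rightarrow> ('a word \<times> 'a word) set \<Rightarrow> 'a \<Rightarrow> 'a word set" where
  "pgen Xg Rl x \<equiv> pres_class Xg Rl [(x, False)]"

lemma pgen_carrier: "x \<in> Xg \<Longrightarrow> pgen Xg Rl x \<in> carrier (presented_group Xg Rl)"
  by (auto simp: pg_carrier intro!: image_eqI[where x="[(x, False)]"])

lemma hom_wev:
  assumes "group H" "h \<in> hom (presented_group Xg Rl) H" "u \<in> gen_words Xg"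
  shows "h (pres_class Xg Rl u) = wev H Xg (\<lambda>x. h (pgen Xg Rl x)) u"
  using assms(3)
proof (induction u)
  case Nil
  have "group_hom (presented_group Xg Rl) H h"
    using assms pg_group by (simp add: group_hom_def group_hom_axioms_def)
  then show ?case using group_hom.hom_one by (fastforce simp: pg_one)
next
  case (Cons a u)
  obtain x b where a: "a = (x, b)" by (cases a)
  have x: "x \<in> Xg" and u: "u \<in> gen_words Xg" using Cons.prems a by auto
  have gh: "group_hom (presented_group Xg Rl) H h"
    using assms pg_group by (simp add: group_hom_def group_hom_axioms_def)
  have split: "pres_class Xg Rl (a # u) = pres_class Xg Rl [a] \<otimes>\<^bsub>presented_group Xg Rl\<^esub> pres_class Xg Rl u"
    using mult_cls[of "[a]" Xg u Rl] x u a by simp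
  have cu: "pres_class Xg Rl u \<in> carrier (presented_group Xg Rl)" using u by (simp add: pg_carrier)
  have ca: "pres_class Xg Rl [a] \<in> carrier (presented_group Xg Rl)" using x a by (simp add: pg_carrier)
  have letter: "h (pres_class Xg Rl [a]) = (if b then inv\<^bsub>H\<^esub> h (pgen Xg Rl x) else h (pgen Xg Rl x))"
  proof (cases b)
    case True
    have "pres_class Xg Rl [(x, True)] \<otimes>\<^bsub>presented_group Xg Rl\<^esub> pgen Xg Rl x = \<one>\<^bsub>presented_group Xg Rl\<^esub>"
      using mult_cls[of "[(x,True)]" Xg "[(x,False)]" Rl] x pres_eq.cancel[OF x, of Rl True]
      by (simp add: pg_one pe_cls)
    then have "pres_class Xg Rl [(x, True)] = inv\<^bsub>presented_group Xg Rl\<^esub> pgen Xg Rl x"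
      using group.inv_equality[OF pg_group] x pgen_carrier ca a True by metis
    then show ?thesis using True a group_hom.hom_inv[OF gh pgen_carrier[OF x]] by simp
  qed (simp add: a)
  show ?case
    using Cons.IH[OF u] split hom_mult[OF assms(2) ca cu] letter x a by simp
qed

lemma id_hom: "(\<lambda>x. x) \<in> hom G G"
  by (rule homI) auto
lemma cl_wev: "u \<in> gen_words Xg \<Longrightarrow> pres_class Xg Rl u = wev (presented_group Xg Rl) Xg (\<lambda>x. pgen Xg Rl x) u"
  using hom_wev[OF pg_group id_hom, of u Xg Rl] by simp



lemma wev_cong: "(\<And>x. x \<in> Xg \<Longrightarrow> f x = f' x) \<Longrightarrow> wev H Xg f w = wev H Xg f' w"
  by (induction w) auto

definition pos :: "'a list \<Rightarrow> 'a word" where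
  "pos u = map (\<lambda>y. (y, False)) u"

lemma pos_simps [simp]: "pos [] = []" "pos (a # u) = (a, False) # pos u" "pos (u @ v) = pos u @ pos v"
  by (auto simp: pos_def)

lemma pos_rev: "pos (rev u) = rev (pos u)" by (simp add: pos_def rev_map)

lemma pos_gw [simp]: "(pos u \<in> gen_words Xg) = (set u \<subseteq> Xg)"
  by (induction u) auto

definition alt :: "'a \<Rightarrow> 'a \<Rightarrow> nat \<Rightarrow> 'a list" where
  "alt t s j = concat (replicate j [t, s]) @ [t]"

lemma rep_shift: "concat (replicate n [s, t]) @ [s] = s # concat (replicate n [t, s])"
  by (induction n) auto

lemma alt_pal: "\<exists>u x. alt t s j = u @ [x] @ rev u \<and> set u \<subseteq> {s, t} \<and> x \<in> {s, t}"
proof (induction j arbitrary: s t)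
  case 0
  show ?case by (rule exI[of _ "[]"]) (auto simp: alt_def)
next
  case (Suc j)
  obtain u x where "alt s t j = u @ [x] @ rev u" "set u \<subseteq> {s, t}" "x \<in> {s, t}"
    using Suc.IH[of t s] Suc.IH[of s t] insert_commute by metis
  moreover have "alt t s (Suc j) = [t] @ alt s t j @ [t]"
  proof -
    have "alt t s (Suc j) = t # (s # concat (replicate j [t, s])) @ [t]" by (simp add: alt_def)
    also have "\<dots> = t # (concat (replicate j [s, t]) @ [s]) @ [t]" by (simp only: rep_shift)
    also have "\<dots> = [t] @ alt s t j @ [t]" by (simp add: alt_def)
    finally show ?thesis .
  qed
  ultimately show ?case by (intro exI[of _ "t # u"] exI[of _ x]) auto
qed

lemma alt_rep: "0 < M \<Longrightarrow> concat (replicate M [s, t]) = s # alt t s (M - 1)"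
  by (cases M) (auto simp: alt_def rep_shift[of _ t s, symmetric])

locale cox =
  fixes S :: "'b set" and m :: "'b \<Rightarrow> 'b \<Rightarrow> enat"
begin

abbreviation "RW \<equiv> coxeter_rels S m"
abbreviation "W0 \<equiv> presented_group S RW"
abbreviation "cl \<equiv> pres_class S RW"
abbreviation "g \<equiv> pgen S RW"

sublocale W: group W0 by (rule pg_group)

lemma g_carrier: "s \<in> S \<Longrightarrow> g s \<in> carrier W0" by (rule pgen_carrier)

lemma cl_carrier: "u \<in> gen_words S \<Longrightarrow> cl u \<in> carrier W0" by (simp add: pg_carrier)

lemma cl_pos_app: "set u \<subseteq> S \<Longrightarrow> set v \<subseteq> S \<Longrightarrow> cl (pos (u @ v)) = cl (pos u) \<otimes>\<^bsub>W0\<^esub> cl (pos v)"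
  by (simp add: mult_cls)

lemma gg: "s \<in> S \<Longrightarrow> cl [(s, False), (s, False)] = \<one>\<^bsub>W0\<^esub>"
  by (auto simp: pg_one coxeter_rels_def intro!: pe_cls pres_eq.rel)

lemma rev_app_one: "set w \<subseteq> S \<Longrightarrow> cl (pos (rev w @ w)) = \<one>\<^bsub>W0\<^esub>"
proof (induction w)
  case Nil then show ?case by (simp add: pg_one)
next
  case (Cons y w)
  have "pres_eq S RW (rev (pos w) @ [(y, False), (y, False)] @ pos w) (rev (pos w) @ [] @ pos w)"
    using Cons.prems by (intro pres_eq.cong pres_eq.rel) (auto simp: coxeter_rels_def)
  then have "cl (pos (rev (y # w) @ y # w)) = cl (pos (rev w @ w))"
    by (simp add: pe_cls pos_rev)
  then show ?case using Cons by simp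
qed

definition Pq :: "'b word set set" where
  "Pq = {cl (pos (u @ [x] @ rev u)) | u x. set u \<subseteq> S \<and> x \<in> S} \<union> {\<one>\<^bsub>W0\<^esub>}"

lemma Pq_cases:
  assumes "a \<in> Pq"
  obtains (one) "a = \<one>\<^bsub>W0\<^esub>" | (pal) u x where "set u \<subseteq> S" "x \<in> S" "a = cl (pos (u @ [x] @ rev u))"
  using assms unfolding Pq_def by blast

lemma Pq_carrier: "a \<in> Pq \<Longrightarrow> a \<in> carrier W0"
  by (erule Pq_cases) (auto intro: cl_carrier)

lemma Pq_sq: "a \<in> Pq \<Longrightarrow> a \<otimes>\<^bsub>W0\<^esub> a = \<one>\<^bsub>W0\<^esub>"
proof (erule Pq_cases)
  fix u x assume *: "set u \<subseteq> S" "x \<in> S" "a = cl (pos (u @ [x] @ rev u))"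
  have "a \<otimes>\<^bsub>W0\<^esub> a = cl (pos ((u @ [x] @ rev u) @ (u @ [x] @ rev u)))"
    using * by (simp add: mult_cls)
  also have "\<dots> = cl (pos (rev (u @ [x] @ rev u) @ (u @ [x] @ rev u)))" by simp
  also have "\<dots> = \<one>\<^bsub>W0\<^esub>" using * by (intro rev_app_one) auto
  finally show ?thesis .
qed simp

lemma Pq_inv: "a \<in> Pq \<Longrightarrow> inv\<^bsub>W0\<^esub> a = a"
  using Pq_sq Pq_carrier W.inv_equality by blast

lemma Pq_aax: "a \<in> Pq \<Longrightarrow> x \<in> carrier W0 \<Longrightarrow> a \<otimes>\<^bsub>W0\<^esub> (a \<otimes>\<^bsub>W0\<^esub> x) = x"
  using Pq_sq Pq_carrier by (metis W.l_one W.m_assoc)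

lemma Pq_one: "\<one>\<^bsub>W0\<^esub> \<in> Pq" by (simp add: Pq_def)

lemma Pq_pal: "set u \<subseteq> S \<Longrightarrow> x \<in> S \<Longrightarrow> cl (pos (u @ [x] @ rev u)) \<in> Pq"
  by (auto simp: Pq_def)

lemma Pq_g: "s \<in> S \<Longrightarrow> g s \<in> Pq"
  using Pq_pal[of "[]" s] by simp

lemma Pq_conj: "a \<in> Pq \<Longrightarrow> b \<in> Pq \<Longrightarrow> a \<otimes>\<^bsub>W0\<^esub> b \<otimes>\<^bsub>W0\<^esub> a \<in> Pq"
proof (erule Pq_cases)
  assume "b \<in> Pq" "a = \<one>\<^bsub>W0\<^esub>" then show ?thesis using Pq_carrier by simp
next
  fix u x assume b: "b \<in> Pq" and a: "set u \<subseteq> S" "x \<in> S" "a = cl (pos (u @ [x] @ rev u))"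
  have aP: "a \<in> Pq" using a Pq_pal by simp
  show ?thesis using b
  proof (cases rule: Pq_cases)
    case one then show ?thesis using aP Pq_sq[of a] Pq_carrier[of a] Pq_one by simp
  next
    case (pal v y)
    let ?u = "u @ [x] @ rev u @ v"
    have "a \<otimes>\<^bsub>W0\<^esub> b \<otimes>\<^bsub>W0\<^esub> a = cl (pos ((u @ [x] @ rev u) @ (v @ [y] @ rev v) @ (u @ [x] @ rev u)))"
      using a pal by (simp add: mult_cls)
    also have "\<dots> = cl (pos (?u @ [y] @ rev ?u))" by simp
    finally show ?thesis using a pal Pq_pal[of ?u y] by simp
  qed
qed

lemma Pq_conj': "a \<in> Pq \<Longrightarrow> b \<in> Pq \<Longrightarrow> a \<otimes>\<^bsub>W0\<^esub> (b \<otimes>\<^bsub>W0\<^esub> a) \<in> Pq"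
  using Pq_conj Pq_carrier by (simp add: W.m_assoc)

definition opq :: "'b word set \<Rightarrow> 'b word set \<Rightarrow> 'b word set" where
  "opq a b = a \<otimes>\<^bsub>W0\<^esub> b \<otimes>\<^bsub>W0\<^esub> inv\<^bsub>W0\<^esub> a"

definition pwq :: "int \<Rightarrow> 'b word set \<Rightarrow> 'b word set" where
  "pwq n a = (if even n then \<one>\<^bsub>W0\<^esub> else a)"

lemma opq_P: "a \<in> Pq \<Longrightarrow> opq a b = a \<otimes>\<^bsub>W0\<^esub> b \<otimes>\<^bsub>W0\<^esub> a"
  by (simp add: opq_def Pq_inv)

lemma opq_closed: "a \<in> Pq \<Longrightarrow> b \<in> Pq \<Longrightarrow> opq a b \<in> Pq"
  by (simp add: opq_P Pq_conj)

lemma opq_invol: "a \<in> Pq \<Longrightarrow> b \<in> Pq \<Longrightarrow> opq a (opq a b) = b"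
  using Pq_carrier Pq_sq by (simp add: opq_P W.m_assoc Pq_aax)

lemma opq_bij: "a \<in> Pq \<Longrightarrow> bij_betw (opq a) Pq Pq"
  by (rule bij_betw_byWitness[where f'="opq a"]) (auto simp: opq_invol opq_closed)

lemma invol_pow:
  assumes "\<And>b. b \<in> A \<Longrightarrow> f b \<in> A" "\<And>b. b \<in> A \<Longrightarrow> f (f b) = b" "b \<in> A"
  shows "(f ^^ k) b = (if even k then b else f b)"
  by (induction k) (use assms in auto)

lemma bij_int_pow_invol:
  assumes f: "\<And>b. b \<in> A \<Longrightarrow> f b \<in> A" "\<And>b. b \<in> A \<Longrightarrow> f (f b) = b" and b: "b \<in> A"
  shows "bij_int_pow A f n b = (if even n then b else f b)"
proof -
  have inj: "inj_on f A" using f by (metis inj_onI)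
  have ti: "the_inv_into A f c = f c" if "c \<in> A" for c
    using f that by (intro the_inv_into_f_eq[OF inj]) auto
  have ti2: "the_inv_into A f c \<in> A" "the_inv_into A f (the_inv_into A f c) = c" if "c \<in> A" for c
    using f that ti by auto
  show ?thesis
  proof (cases "0 \<le> n")
    case True
    then show ?thesis unfolding bij_int_pow_def
      using invol_pow[of A f b "nat n", OF f b] by (simp add: even_nat_iff)
  next
    case False
    then show ?thesis unfolding bij_int_pow_def
      using invol_pow[of A "the_inv_into A f" b "nat (- n)", OF ti2 b] ti[OF b]
      by (simp add: even_nat_iff)
  qed
qed

lemma pq: "power_quandle Pq opq pwq \<one>\<^bsub>W0\<^esub>"
  unfolding power_quandle_def
proof (intro conjI ballI allI)
  show "\<one>\<^bsub>W0\<^esub> \<in> Pq" by (rule Pq_one)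
  show "\<And>a b. a \<in> Pq \<Longrightarrow> b \<in> Pq \<Longrightarrow> opq a b \<in> Pq" by (rule opq_closed)
  show "\<And>n a. a \<in> Pq \<Longrightarrow> pwq n a \<in> Pq" by (simp add: pwq_def Pq_one)
  show "\<And>a. a \<in> Pq \<Longrightarrow> bij_betw (opq a) Pq Pq"
    by (rule opq_bij)
  show "\<And>a b c. a \<in> Pq \<Longrightarrow> b \<in> Pq \<Longrightarrow> c \<in> Pq \<Longrightarrow> opq a (opq b c) = opq (opq a b) (opq a c)"
    using Pq_carrier by (simp add: opq_P opq_closed W.m_assoc Pq_aax Pq_conj')
  show "\<And>a. a \<in> Pq \<Longrightarrow> opq a a = a"
    using Pq_carrier by (simp add: opq_P W.m_assoc Pq_aax Pq_sq)
  show "\<And>b. b \<in> Pq \<Longrightarrow> opq \<one>\<^bsub>W0\<^esub> b = b"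
    using Pq_carrier by (simp add: opq_def)
  show "\<And>a. a \<in> Pq \<Longrightarrow> opq a \<one>\<^bsub>W0\<^esub> = \<one>\<^bsub>W0\<^esub>"
    using Pq_carrier by (simp add: opq_P Pq_sq)
  show "\<And>a. a \<in> Pq \<Longrightarrow> pwq 1 a = a" by (simp add: pwq_def)
  show "\<And>m n a. a \<in> Pq \<Longrightarrow> pwq m (pwq n a) = pwq (m * n) a" by (simp add: pwq_def)
  show "\<And>a. a \<in> Pq \<Longrightarrow> pwq 0 a = \<one>\<^bsub>W0\<^esub>" by (simp add: pwq_def)
  show "\<And>n a b. a \<in> Pq \<Longrightarrow> b \<in> Pq \<Longrightarrow> opq a (pwq n b) = pwq n (opq a b)"
    using Pq_carrier by (simp add: pwq_def opq_P Pq_sq)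
  show "opq (pwq n a) b = bij_int_pow Pq (opq a) n b" if "a \<in> Pq" "b \<in> Pq" for n a b
  proof -
    have "bij_int_pow Pq (opq a) n b = (if even n then b else opq a b)"
      by (rule bij_int_pow_invol) (use that opq_closed opq_invol in auto)
    then show ?thesis using that Pq_carrier by (simp add: pwq_def opq_def)
  qed
qed

end



lemma pos_rep: "pos (concat (replicate M [s, t])) = concat (replicate M [(s, False), (t, False)])"
  by (induction M) auto

lemma alt_set: "set (alt t s j) \<subseteq> {s, t}"
  by (auto simp: alt_def)

context cox
begin

abbreviation "RG \<equiv> Gr_rels Pq opq pwq \<one>\<^bsub>W0\<^esub>"
abbreviation "GG \<equiv> presented_group Pq RG"
abbreviation "sg \<equiv> pgen Pq RG"
abbreviation "clg \<equiv> pres_class Pq RG"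

sublocale GG: group GG by (rule pg_group)

lemma sg_carrier: "p \<in> Pq \<Longrightarrow> sg p \<in> carrier GG" by (rule pgen_carrier)

lemma rel_e: "([(\<one>\<^bsub>W0\<^esub>, False)], []) \<in> RG"
  unfolding Gr_rels_def by blast

lemma rel_op: "a \<in> Pq \<Longrightarrow> b \<in> Pq \<Longrightarrow> ([(opq a b, False)], [(a, False), (b, False), (a, True)]) \<in> RG"
  unfolding Gr_rels_def by blast

lemma rel_pw: "a \<in> Pq \<Longrightarrow> ([(pwq n a, False)], gen_pow_word a n) \<in> RG"
  unfolding Gr_rels_def by blast

lemma sg_one: "sg \<one>\<^bsub>W0\<^esub> = \<one>\<^bsub>GG\<^esub>"
proof -
  have "sg \<one>\<^bsub>W0\<^esub> = clg []" by (rule pe_cls[OF pres_eq.rel[OF rel_e]])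
  also have "clg [] = \<one>\<^bsub>GG\<^esub>" by (rule pg_one[symmetric])
  finally show ?thesis .
qed

lemma sg_sq: assumes p: "p \<in> Pq" shows "sg p \<otimes>\<^bsub>GG\<^esub> sg p = \<one>\<^bsub>GG\<^esub>"
proof -
  have "sg p \<otimes>\<^bsub>GG\<^esub> sg p = clg [(p, False), (p, False)]" using p by (simp add: mult_cls)
  also have "\<dots> = clg (gen_pow_word p 2)" by (simp add: gen_pow_word_def numeral_2_eq_2)
  also have "\<dots> = clg [(pwq 2 p, False)]"
    by (rule pe_cls[OF pres_eq.sym[OF pres_eq.rel[OF rel_pw[OF p]]]])
  also have "\<dots> = \<one>\<^bsub>GG\<^esub>" using sg_one by (simp add: pwq_def)
  finally show ?thesis .
qed

lemma sg_inv: "p \<in> Pq \<Longrightarrow> inv\<^bsub>GG\<^esub> sg p = sg p"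
  using sg_sq sg_carrier GG.inv_equality by blast

lemma sg_conj: assumes a: "a \<in> Pq" and b: "b \<in> Pq"
  shows "sg (opq a b) = sg a \<otimes>\<^bsub>GG\<^esub> sg b \<otimes>\<^bsub>GG\<^esub> sg a"
proof -
  have aT: "clg [(a, True)] = sg a"
  proof -
    have "clg [(a, True)] \<otimes>\<^bsub>GG\<^esub> sg a = clg [(a, True), (a, False)]" using a by (simp add: mult_cls)
    also have "\<dots> = \<one>\<^bsub>GG\<^esub>" using pres_eq.cancel[OF a, of RG True] by (simp add: pg_one pe_cls)
    finally have "clg [(a, True)] \<otimes>\<^bsub>GG\<^esub> sg a = \<one>\<^bsub>GG\<^esub>" .
    then have "clg [(a, True)] = inv\<^bsub>GG\<^esub> sg a"
      using GG.inv_equality a sg_carrier by (simp add: pg_carrier)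
    then show ?thesis using sg_inv a by simp
  qed
  have "sg (opq a b) = clg ([(a, False)] @ [(b, False)] @ [(a, True)])"
    using pe_cls[OF pres_eq.rel[OF rel_op[OF a b]]] by simp
  also have "\<dots> = sg a \<otimes>\<^bsub>GG\<^esub> (sg b \<otimes>\<^bsub>GG\<^esub> clg [(a, True)])"
    using a b by (simp add: mult_cls)
  also have "\<dots> = sg a \<otimes>\<^bsub>GG\<^esub> sg b \<otimes>\<^bsub>GG\<^esub> sg a"
    using a b aT by (simp add: GG.m_assoc sg_carrier)
  finally show ?thesis .
qed

abbreviation "fphi \<equiv> (\<lambda>s. sg (g s))"

lemma fphi_carrier: "fphi ` S \<subseteq> carrier GG"
  using Pq_g sg_carrier by auto

lemma L: "set u \<subseteq> S \<Longrightarrow> x \<in> S \<Longrightarrow>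
  sg (cl (pos (u @ [x] @ rev u))) = wev GG S fphi (pos (u @ [x] @ rev u))"
proof (induction u)
  case Nil
  then show ?case using Pq_g sg_carrier by simp
next
  case (Cons y u)
  let ?w = "u @ [x] @ rev u"
  have y: "y \<in> S" and u: "set u \<subseteq> S" using Cons.prems by auto
  have qP: "cl (pos ?w) \<in> Pq" using Pq_pal u Cons.prems by simp
  have e: "pos ((y # u) @ [x] @ rev (y # u)) = pos [y] @ pos ?w @ pos [y]" by simp
  have "cl (pos ((y # u) @ [x] @ rev (y # u))) = g y \<otimes>\<^bsub>W0\<^esub> (cl (pos ?w) \<otimes>\<^bsub>W0\<^esub> g y)"
    unfolding e using y u Cons.prems by (simp add: mult_cls del: pos_simps(3) append_Cons)
  also have "\<dots> = opq (g y) (cl (pos ?w))"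
    using Pq_g[OF y] qP Pq_carrier by (simp add: opq_P W.m_assoc)
  finally have 1: "sg (cl (pos ((y # u) @ [x] @ rev (y # u)))) = sg (g y) \<otimes>\<^bsub>GG\<^esub> sg (cl (pos ?w)) \<otimes>\<^bsub>GG\<^esub> sg (g y)"
    using sg_conj[OF Pq_g[OF y] qP] by simp
  have "wev GG S fphi (pos ((y # u) @ [x] @ rev (y # u))) =
      wev GG S fphi (pos [y]) \<otimes>\<^bsub>GG\<^esub> (wev GG S fphi (pos ?w) \<otimes>\<^bsub>GG\<^esub> wev GG S fphi (pos [y]))"
    unfolding e by (simp only: GG.wev_append[OF fphi_carrier])
  also have "\<dots> = sg (g y) \<otimes>\<^bsub>GG\<^esub> sg (cl (pos ?w)) \<otimes>\<^bsub>GG\<^esub> sg (g y)"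
    using Cons.IH[OF u Cons.prems(2)] y Pq_g[OF y] sg_carrier qP
    by (simp add: GG.m_assoc GG.wev_closed[OF fphi_carrier])
  finally have 2: "wev GG S fphi (pos ((y # u) @ [x] @ rev (y # u))) = sg (g y) \<otimes>\<^bsub>GG\<^esub> sg (cl (pos ?w)) \<otimes>\<^bsub>GG\<^esub> sg (g y)" .
  show "sg (cl (pos ((y # u) @ [x] @ rev (y # u)))) = wev GG S fphi (pos ((y # u) @ [x] @ rev (y # u)))"
    by (simp only: 1 2)
qed

lemma phi_rel: assumes "(l, r) \<in> RW" shows "wev GG S fphi l = wev GG S fphi r"
proof -
  consider (a) s where "(l, r) = ([(s, False), (s, False)], [])" "s \<in> S"
    | (b) s t where "(l, r) = (concat (replicate (the_enat (m s t)) [(s, False), (t, False)]), [])"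
       "s \<in> S" "t \<in> S" "s \<noteq> t" "m s t \<noteq> \<infinity>"
    using assms unfolding coxeter_rels_def by blast
  then show ?thesis
  proof cases
    case (a s)
    then show ?thesis using sg_sq[OF Pq_g] Pq_g sg_carrier by auto
  next
    case (b s t)
    then have lr: "(l, r) = (concat (replicate (the_enat (m s t)) [(s, False), (t, False)]), [])"
      and st: "s \<in> S" "t \<in> S" "s \<noteq> t" "m s t \<noteq> \<infinity>" by auto
  define M where "M = the_enat (m s t)"
  show ?thesis
  proof (cases "M = 0")
    case True then show ?thesis using lr M_def by simp
  next
    case False
    let ?a = "alt t s (M - 1)"
    have aS: "set ?a \<subseteq> S" using alt_set[of t s "M - 1"] st by auto
    have l: "l = pos (s # ?a)" using lr M_def alt_rep[of M s t] False by (simp add: pos_rep[symmetric])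
    have r: "r = []" using lr by simp
    have lR: "(l, []) \<in> RW" using assms r by simp
    have "cl l = cl []" by (rule pe_cls[OF pres_eq.rel[OF lR]])
    then have cl1: "cl l = \<one>\<^bsub>W0\<^esub>" by (simp add: pg_one)
    have "cl l = cl ([(s, False)] @ pos ?a)" unfolding l by simp
    also have "\<dots> = g s \<otimes>\<^bsub>W0\<^esub> cl (pos ?a)"
      by (rule mult_cls[symmetric]) (use st aS in simp_all)
    finally have gsa: "g s \<otimes>\<^bsub>W0\<^esub> cl (pos ?a) = \<one>\<^bsub>W0\<^esub>" using cl1 by simp
    have cac: "cl (pos ?a) \<in> carrier W0" using aS by (simp add: cl_carrier)
    have "cl (pos ?a) = g s \<otimes>\<^bsub>W0\<^esub> (g s \<otimes>\<^bsub>W0\<^esub> cl (pos ?a))"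
      by (rule Pq_aax[OF Pq_g[OF st(1)] cac, symmetric])
    also have "\<dots> = g s" unfolding gsa using g_carrier[OF st(1)] by simp
    finally have ga: "cl (pos ?a) = g s" .
    obtain u x where ux: "?a = u @ [x] @ rev u" "set u \<subseteq> {s, t}" "x \<in> {s, t}"
      using alt_pal[of t s "M - 1"] by blast
    have uS: "set u \<subseteq> S" "x \<in> S" using ux st by auto
    have "sg (cl (pos ?a)) = wev GG S fphi (pos ?a)"
      unfolding ux(1) by (rule L[OF uS])
    then have wa: "wev GG S fphi (pos ?a) = sg (g s)" using ga by simp
    have "wev GG S fphi l = sg (g s) \<otimes>\<^bsub>GG\<^esub> wev GG S fphi (pos ?a)"
      unfolding l using st(1) by simp
    also have "\<dots> = \<one>\<^bsub>GG\<^esub>" unfolding wa by (rule sg_sq[OF Pq_g[OF st(1)]])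
    finally show ?thesis using r by simp
  qed
qed
qed

definition "phi = pg_ext GG S fphi"

lemma phi_hom: "phi \<in> hom W0 GG"
  unfolding phi_def by (rule pg_ext_hom[OF GG.is_group fphi_carrier phi_rel])

lemma phi_cls: "u \<in> gen_words S \<Longrightarrow> phi (cl u) = wev GG S fphi u"
  unfolding phi_def by (rule pg_ext_cls[OF GG.is_group fphi_carrier phi_rel])

lemma Pq_id: "id ` Pq \<subseteq> carrier W0" using Pq_carrier by auto

lemma wev_rep: "a \<in> Pq \<Longrightarrow> wev W0 Pq id (replicate k (a, b)) = (if even k then \<one>\<^bsub>W0\<^esub> else a)"
  by (induction k) (auto simp: Pq_inv Pq_sq Pq_carrier)

lemma psi_rel: assumes "(l, r) \<in> RG" shows "wev W0 Pq id l = wev W0 Pq id r"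
  using assms unfolding Gr_rels_def
proof (elim UnE CollectE exE conjE)
  fix a b assume "(l, r) = ([(opq a b, False)], [(a, False), (b, False), (a, True)])" "a \<in> Pq" "b \<in> Pq"
  then show ?thesis using opq_closed Pq_carrier by (auto simp: opq_def W.m_assoc)
next
  fix a n assume "(l, r) = ([(pwq n a, False)], gen_pow_word a n)" "a \<in> Pq"
  moreover have "even (nat \<bar>n\<bar>) = even n" by (cases "0 \<le> n") (auto simp: even_nat_iff)
  ultimately show ?thesis using Pq_carrier Pq_one
    by (auto simp: gen_pow_word_def wev_rep pwq_def)
next
  assume "(l, r) \<in> {([(\<one>\<^bsub>W0\<^esub>, False)], [])}"
  then show ?thesis using Pq_one by auto
qed

definition "psi = pg_ext W0 Pq id"

lemma psi_hom: "psi \<in> hom GG W0"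
  unfolding psi_def by (rule pg_ext_hom[OF W.is_group Pq_id psi_rel])

lemma psi_cls: "u \<in> gen_words Pq \<Longrightarrow> psi (clg u) = wev W0 Pq id u"
  unfolding psi_def by (rule pg_ext_cls[OF W.is_group Pq_id psi_rel])

lemma psi_sg: "p \<in> Pq \<Longrightarrow> psi (sg p) = p"
  using psi_cls[of "[(p, False)]"] Pq_carrier by simp

lemma phi_g: "s \<in> S \<Longrightarrow> phi (g s) = sg (g s)"
  using phi_cls[of "[(s, False)]"] Pq_g sg_carrier by simp


lemma psi_phi: assumes "A \<in> carrier W0" shows "psi (phi A) = A"
proof -
  obtain u where u: "u \<in> gen_words S" "A = cl u" using assms by (auto simp: pg_carrier)
  have "(psi \<circ> phi) (cl u) = wev W0 S (\<lambda>x. (psi \<circ> phi) (g x)) u"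
    by (rule hom_wev[OF W.is_group hom_compose[OF phi_hom psi_hom] u(1)])
  also have "\<dots> = wev W0 S (\<lambda>x. g x) u"
    by (rule wev_cong) (simp add: phi_g psi_sg Pq_g)
  also have "\<dots> = cl u"
    by (rule cl_wev[OF u(1), symmetric])
  finally show ?thesis using u by simp
qed

lemma phi_Pq: "p \<in> Pq \<Longrightarrow> phi p = sg p"
proof (erule Pq_cases)
  assume "p = \<one>\<^bsub>W0\<^esub>"
  then show ?thesis using phi_cls[of "[]"] sg_one by (simp add: pg_one)
next
  fix u x assume "set u \<subseteq> S" "x \<in> S" "p = cl (pos (u @ [x] @ rev u))"
  then show ?thesis using phi_cls[of "pos (u @ [x] @ rev u)"] L[of u x] by simp
qed

lemma phi_psi: assumes "B \<in> carrier GG" shows "phi (psi B) = B"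
proof -
  obtain u where u: "u \<in> gen_words Pq" "B = clg u" using assms by (auto simp: pg_carrier)
  have "(phi \<circ> psi) (clg u) = wev GG Pq (\<lambda>x. (phi \<circ> psi) (sg x)) u"
    by (rule hom_wev[OF GG.is_group hom_compose[OF psi_hom phi_hom] u(1)])
  also have "\<dots> = wev GG Pq (\<lambda>x. sg x) u"
    by (rule wev_cong) (simp add: phi_Pq psi_sg)
  also have "\<dots> = clg u"
    by (rule cl_wev[OF u(1), symmetric])
  finally show ?thesis using u by simp
qed

lemma W0_iso_GG: "W0 \<cong> GG"
proof (rule is_isoI, rule isoI[OF phi_hom])
  show "bij_betw phi (carrier W0) (carrier GG)"
    by (rule bij_betw_byWitness[where f'=psi])
      (use psi_phi phi_psi hom_carrier[OF phi_hom] hom_carrier[OF psi_hom] in auto)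
qed

end

theorem mainTheorem16:
  fixes S :: "'b set" and m :: "'b \<Rightarrow> 'b \<Rightarrow> enat"
    and W :: "('c, 'd) monoid_scheme"
  assumes "coxeter_matrix S m"
    and "group W"
    and "W \<cong> coxeter_group S m"
  shows "\<exists>(P :: 'b word set set) op pw e.
           power_quandle P op pw e \<and> W \<cong> Gr P op pw e"
proof (intro exI conjI)
  show "power_quandle (cox.Pq S m) (cox.opq S m) (cox.pwq S m) \<one>\<^bsub>coxeter_group S m\<^esub>"
    unfolding coxeter_group_def by (rule cox.pq)
  show "W \<cong> Gr (cox.Pq S m) (cox.opq S m) (cox.pwq S m) \<one>\<^bsub>coxeter_group S m\<^esub>"
    using iso_trans[OF assms(3)[unfolded coxeter_group_def] cox.W0_iso_GG[of S m]]
    by (simp add: Gr_def coxeter_group_def)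
qed


end
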